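(* Let $\mathbb{K}\in\{\mathbb{R},\mathbb{C}\}$ and let $\mathcal{X}$ be a topological $\mathbb{K}$-vector space whose topological dual $\mathcal{X}^{\ast}$ separates the points of $\mathcal{X}$. Then the set $\mathbf{B}(\mathcal{X}^{\ast})$ is a closed subset of $\mathbf{F}(\mathcal{X}^{\ast})$ in the weak*-Hausdorff hypertopology, it is convex and path-connected, and it is a connected component (maximal connected subset) of $\mathbf{F}(\mathcal{X}^{\ast})$.
   Context: Topological vector spaces are Hausdorff. $\mathcal{X}^{\ast}$ carries the weak* topology. $\mathbf{F}(\mathcal{X}^{\ast})$ is the set of nonempty weak*-closed subsets of $\mathcal{X}^{\ast}$, endowed with the weak*-Hausdorff hypertopology: the topology generated by the extended pseudometrics $d_H^{(A)}(F,\tilde F)=\max\{\sup_{\sigma\in F}\inf_{\tilde\sigma\in\tilde F}|(\sigma-\tilde\sigma)(A)|,\ \sup_{\tilde\sigma\in\tilde F}\inf_{\sigma\in F}|(\sigma-\tilde\sigma)(A)|\}\in[0,\infty]$, $A\in\mathcal{X}$. $\mathbf{B}(\mathcal{X}^{\ast})$ is the set of nonempty weak*-closed subsets $B\subseteq\mathcal{X}^{\ast}$ that are bounded in the weak* topology, i.e. $\sup_{\sigma\in B}|\sigma(A)|<\infty$ for every $A\in\mathcal{X}$. Convexity of $\mathbf{B}(\mathcal{X}^{\ast})$ means: for $B_0,B_1\in\mathbf{B}(\mathcal{X}^{\ast})$ and $\lambda\in[0,1]$, the (weak*-closure of the) set $\{(1-\lambda)\sigma_0+\lambda\sigma_1:\sigma_0\in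 B_0,\sigma_1\in B_1\}$ belongs to $\mathbf{B}(\mathcal{X}^{\ast})$. *)

theory Defs
  imports "HOL-Analysis.Analysis"
begin

text \<open>Scalar field: a type 'k of class real_normed_field and euclidean_space;
  such a type is (isomorphic to) the reals or the complex numbers.\<close>

definition tvs :: "('k::real_normed_field \<Rightarrow> 'x::{ab_group_add,t2_space} \<Rightarrow> 'x) \<Rightarrow> bool" where
  "tvs smult_X \<longleftrightarrow> Vector_Spaces.vector_space smult_X
     \<and> continuous_on UNIV (\<lambda>p::'x \<times> 'x. fst p + snd p)
     \<and> continuous_on UNIV (\<lambda>p::'k \<times> 'x. smult_X (fst p) (snd p))"

definition tdual :: "('k::real_normed_field \<Rightarrow> 'x::{ab_group_add,t2_space} \<Rightarrow> 'x) \<Rightarrow> ('x \<Rightarrow> 'k) set" where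
  "tdual smult_X = {\<sigma>. Vector_Spaces.linear smult_X (*) \<sigma> \<and> continuous_on UNIV \<sigma>}"

definition dual_separates :: "('k::real_normed_field \<Rightarrow> 'x::{ab_group_add,t2_space} \<Rightarrow> 'x) \<Rightarrow> bool" where
  "dual_separates smult_X \<longleftrightarrow> (\<forall>x y. x \<noteq> y \<longrightarrow> (\<exists>\<sigma>\<in>tdual smult_X. \<sigma> x \<noteq> \<sigma> y))"

definition weakstar :: "('k::real_normed_field \<Rightarrow> 'x::{ab_group_add,t2_space} \<Rightarrow> 'x) \<Rightarrow> ('x \<Rightarrow> 'k) topology" where
  "weakstar smult_X = topology_generated_by {{\<sigma>\<in>tdual smult_X. \<sigma> A \<in> U} | A U. open U}"

definition dH :: "'x \<Rightarrow> ('x \<Rightarrow> 'k::real_normed_field) set \<Rightarrow> ('x \<Rightarrow> 'k) set \<Rightarrow> ereal" where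
  "dH A F G = max (SUP \<sigma>\<in>F. INF \<tau>\<in>G. ereal (norm (\<sigma> A - \<tau> A)))
                   (SUP \<tau>\<in>G. INF \<sigma>\<in>F. ereal (norm (\<sigma> A - \<tau> A)))"

definition Fsets :: "('k::real_normed_field \<Rightarrow> 'x::{ab_group_add,t2_space} \<Rightarrow> 'x) \<Rightarrow> ('x \<Rightarrow> 'k) set set" where
  "Fsets smult_X = {F. F \<noteq> {} \<and> closedin (weakstar smult_X) F}"

definition Bsets :: "('k::real_normed_field \<Rightarrow> 'x::{ab_group_add,t2_space} \<Rightarrow> 'x) \<Rightarrow> ('x \<Rightarrow> 'k) set set" where
  "Bsets smult_X = {B \<in> Fsets smult_X. \<forall>A. bdd_above ((\<lambda>\<sigma>. norm (\<sigma> A)) ` B)}"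

definition hypertop :: "('k::real_normed_field \<Rightarrow> 'x::{ab_group_add,t2_space} \<Rightarrow> 'x) \<Rightarrow> ('x \<Rightarrow> 'k) set topology" where
  "hypertop smult_X = topology_generated_by
     {{G \<in> Fsets smult_X. dH A F G < ereal \<epsilon>} | A F \<epsilon>. F \<in> Fsets smult_X \<and> \<epsilon> > 0}"

end

theory Submission
  imports Defs
begin


lemma tdual_comb:
  fixes s :: "'k::real_normed_field \<Rightarrow> 'x::{ab_group_add,t2_space} \<Rightarrow> 'x"
  assumes "\<sigma>0 \<in> tdual s" "\<sigma>1 \<in> tdual s"
  shows "(\<lambda>x. a * \<sigma>0 x + b * \<sigma>1 x) \<in> tdual s"
proof -
  have l0: "Vector_Spaces.linear s (*) \<sigma>0" and l1: "Vector_Spaces.linear s (*) \<sigma>1"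
    and c0: "continuous_on UNIV \<sigma>0" and c1: "continuous_on UNIV \<sigma>1"
    using assms by (auto simp: tdual_def)
  have "Vector_Spaces.linear s (*) (\<lambda>x. a * \<sigma>0 x + b * \<sigma>1 x)"
    using l0 l1 unfolding Vector_Spaces.linear_def module_hom_def module_hom_axioms_def
    by (auto simp: algebra_simps module_iff_vector_space)
  moreover have "continuous_on UNIV (\<lambda>x. a * \<sigma>0 x + b * \<sigma>1 x)"
    by (intro continuous_intros c0 c1)
  ultimately show ?thesis by (simp add: tdual_def)
qed

lemma topspace_weakstar: "topspace (weakstar s) = tdual s"
  unfolding weakstar_def topology_generated_by_topspace
  by (auto intro!: exI[of _ UNIV])

lemma openin_eval:
  assumes "open V"
  shows "openin (weakstar s) {\<sigma>\<in>tdual s. \<sigma> A \<in> V}"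
  unfolding weakstar_def
  by (rule topology_generated_by_Basis) (use assms in blast)

lemma closedin_eval:
  assumes "closed K"
  shows "closedin (weakstar s) {\<sigma>\<in>tdual s. \<sigma> A \<in> K}"
proof -
  have "tdual s - {\<sigma>\<in>tdual s. \<sigma> A \<in> K} = {\<sigma>\<in>tdual s. \<sigma> A \<in> -K}" by auto
  moreover have "openin (weakstar s) {\<sigma>\<in>tdual s. \<sigma> A \<in> -K}"
    using assms by (intro openin_eval) (auto simp: open_Compl)
  ultimately show ?thesis
    by (simp add: closedin_def topspace_weakstar)
qed

lemma cont_scale:
  fixes s :: "'k::real_normed_field \<Rightarrow> 'x::{ab_group_add,t2_space} \<Rightarrow> 'x"
  shows "continuous_map (weakstar s) (weakstar s) (\<lambda>\<sigma> x. c * \<sigma> x)"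
  unfolding weakstar_def
proof (rule continuous_on_generated_topo)
  fix U assume "U \<in> {{\<sigma>\<in>tdual s. \<sigma> A \<in> U} | A U. open U}"
  then obtain A V where U: "U = {\<sigma>\<in>tdual s. \<sigma> A \<in> V}" "open V" by auto
  have "(\<lambda>\<sigma> x. c * \<sigma> x) -` U \<inter> tdual s = {\<sigma>\<in>tdual s. \<sigma> A \<in> (\<lambda>z. c * z) -` V}"
    using U tdual_comb[of _ s _ 0 c] by auto
  moreover have "open ((\<lambda>z. c * z) -` V)"
    using U(2) by (intro continuous_open_vimage) (auto intro: continuous_intros)
  ultimately have "openin (weakstar s) ((\<lambda>\<sigma> x. c * \<sigma> x) -` U \<inter> topspace (weakstar s))"
    using openin_eval[of "(\<lambda>z. c * z) -` V" s A] by (simp add: topspace_weakstar)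
  then show "openin (topology_generated_by {{\<sigma>\<in>tdual s. \<sigma> A \<in> U} | A U. open U})
      ((\<lambda>\<sigma> x. c * \<sigma> x) -` U \<inter> topspace (topology_generated_by {{\<sigma>\<in>tdual s. \<sigma> A \<in> U} | A U. open U}))"
    unfolding weakstar_def .
next
  show "(\<lambda>\<sigma> x. c * \<sigma> x) ` topspace (topology_generated_by {{\<sigma>\<in>tdual s. \<sigma> A \<in> U} | A U. open U})
    \<subseteq> \<Union> {{\<sigma>\<in>tdual s. \<sigma> A \<in> U} | A U. open U}"
    using topspace_weakstar[of s] tdual_comb[of _ s _ 0 c] unfolding weakstar_def
    by (auto intro!: exI[of _ UNIV])
qed


lemma zero_tdual:
  fixes s :: "'k::real_normed_field \<Rightarrow> 'x::{ab_group_add,t2_space} \<Rightarrow> 'x"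
  assumes "tvs s"
  shows "(\<lambda>x. 0::'k) \<in> tdual s"
proof -
  have "Vector_Spaces.vector_space s" using assms by (simp add: tvs_def)
  then have "Vector_Spaces.linear s (*) (\<lambda>x. 0::'k)"
    unfolding Vector_Spaces.linear_def module_hom_def module_hom_axioms_def
    by (auto simp: module_iff_vector_space vector_space_over_itself.vector_space_axioms)
  then show ?thesis by (simp add: tdual_def)
qed

lemma closed_zero:
  fixes s :: "'k::real_normed_field \<Rightarrow> 'x::{ab_group_add,t2_space} \<Rightarrow> 'x"
  assumes "tvs s"
  shows "closedin (weakstar s) {\<lambda>x. 0}"
proof -
  have "{\<lambda>x. 0} = \<Inter> (range (\<lambda>A. {\<sigma>\<in>tdual s. \<sigma> A \<in> {0::'k}}))"
    using zero_tdual[OF assms] by (auto simp: fun_eq_iff)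
  moreover have "closedin (weakstar s) (\<Inter> (range (\<lambda>A. {\<sigma>\<in>tdual s. \<sigma> A \<in> {0::'k}})))"
    using closedin_eval[of "{0::'k}" s] by (intro closedin_Inter) auto
  ultimately show ?thesis by simp
qed

lemma Fsets_sub: "F \<in> Fsets s \<Longrightarrow> F \<subseteq> tdual s"
  unfolding Fsets_def using closedin_subset[of "weakstar s" F] topspace_weakstar[of s] by auto

lemma scaled_F:
  fixes s :: "'k::real_normed_field \<Rightarrow> 'x::{ab_group_add,t2_space} \<Rightarrow> 'x"
  assumes "B \<in> Fsets s" "c \<noteq> 0"
  shows "(\<lambda>\<sigma> x. c * \<sigma> x) ` B \<in> Fsets s"
proof -
  have sub: "B \<subseteq> tdual s" using Fsets_sub[OF assms(1)] .
  have "(\<lambda>\<sigma> x. c * \<sigma> x) ` B = {\<rho> \<in> topspace (weakstar s). (\<lambda>x. inverse c * \<rho> x) \<in> B}"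
  proof (intro equalityI subsetI)
    fix \<rho> assume "\<rho> \<in> (\<lambda>\<sigma> x. c * \<sigma> x) ` B"
    then obtain \<sigma> where "\<sigma> \<in> B" "\<rho> = (\<lambda>x. c * \<sigma> x)" by auto
    moreover have "(\<lambda>x. inverse c * (c * \<sigma> x)) = \<sigma>" using assms(2) by auto
    ultimately show "\<rho> \<in> {\<rho> \<in> topspace (weakstar s). (\<lambda>x. inverse c * \<rho> x) \<in> B}"
      using sub tdual_comb[of \<sigma> s \<sigma> c 0] assms(2) by (auto simp: topspace_weakstar)
  next
    fix \<rho> assume "\<rho> \<in> {\<rho> \<in> topspace (weakstar s). (\<lambda>x. inverse c * \<rho> x) \<in> B}"
    then have "(\<lambda>x. inverse c * \<rho> x) \<in> B" by auto
    moreover have "\<rho> = (\<lambda>x. c * (inverse c * \<rho> x))" using assms(2) by auto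
    ultimately show "\<rho> \<in> (\<lambda>\<sigma> x. c * \<sigma> x) ` B" by (metis image_eqI)
  qed
  moreover have "closedin (weakstar s) {\<rho> \<in> topspace (weakstar s). (\<lambda>x. inverse c * \<rho> x) \<in> B}"
    using assms(1) by (intro closedin_continuous_map_preimage[OF cont_scale]) (auto simp: Fsets_def)
  ultimately show ?thesis using assms(1) by (auto simp: Fsets_def)
qed

lemma dH_lessD:
  assumes "dH A F G < ereal e"
  shows "(\<forall>\<sigma>\<in>F. \<exists>\<tau>\<in>G. norm (\<sigma> A - \<tau> A) < e) \<and> (\<forall>\<tau>\<in>G. \<exists>\<sigma>\<in>F. norm (\<sigma> A - \<tau> A) < e)"
proof -
  have 1: "(SUP \<sigma>\<in>F. INF \<tau>\<in>G. ereal (norm (\<sigma> A - \<tau> A))) < ereal e"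
   and 2: "(SUP \<tau>\<in>G. INF \<sigma>\<in>F. ereal (norm (\<sigma> A - \<tau> A))) < ereal e"
    using assms by (auto simp: dH_def)
  show ?thesis
  proof (intro conjI ballI)
    fix \<sigma> assume "\<sigma> \<in> F"
    then have "(INF \<tau>\<in>G. ereal (norm (\<sigma> A - \<tau> A))) < ereal e" using SUP_lessD[OF 1] by blast
    then show "\<exists>\<tau>\<in>G. norm (\<sigma> A - \<tau> A) < e" by (auto simp: INF_less_iff)
  next
    fix \<tau> assume "\<tau> \<in> G"
    then have "(INF \<sigma>\<in>F. ereal (norm (\<sigma> A - \<tau> A))) < ereal e" using SUP_lessD[OF 2] by blast
    then show "\<exists>\<sigma>\<in>F. norm (\<sigma> A - \<tau> A) < e" by (auto simp: INF_less_iff)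
  qed
qed

lemma dH_leI:
  assumes "\<forall>\<sigma>\<in>F. \<exists>\<tau>\<in>G. norm (\<sigma> A - \<tau> A) \<le> e" "\<forall>\<tau>\<in>G. \<exists>\<sigma>\<in>F. norm (\<sigma> A - \<tau> A) \<le> e"
  shows "dH A F G \<le> ereal e"
  unfolding dH_def
proof (intro max.boundedI SUP_least)
  fix \<sigma> assume "\<sigma> \<in> F"
  then obtain \<tau> where "\<tau> \<in> G" "norm (\<sigma> A - \<tau> A) \<le> e" using assms(1) by blast
  then show "(INF \<tau>\<in>G. ereal (norm (\<sigma> A - \<tau> A))) \<le> ereal e" by (intro INF_lower2) auto
next
  fix \<tau> assume "\<tau> \<in> G"
  then obtain \<sigma> where "\<sigma> \<in> F" "norm (\<sigma> A - \<tau> A) \<le> e" using assms(2) by blast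
  then show "(INF \<sigma>\<in>F. ereal (norm (\<sigma> A - \<tau> A))) \<le> ereal e" by (intro INF_lower2) auto
qed

lemma dH_self: "dH A F F < ereal 1"
proof -
  have "dH A F F \<le> ereal 0" by (rule dH_leI) auto
  then show ?thesis by (simp add: order_le_less_trans)
qed

lemma topspace_hyper: "topspace (hypertop s) = Fsets s"
  unfolding hypertop_def topology_generated_by_topspace
proof (intro equalityI subsetI)
  fix F assume "F \<in> Fsets s"
  have "{G \<in> Fsets s. dH undefined F G < ereal 1} \<in> {{G \<in> Fsets s. dH A F G < ereal \<epsilon>} | A F \<epsilon>. F \<in> Fsets s \<and> \<epsilon> > 0}"
    by (rule CollectI, rule exI[of _ undefined], rule exI[of _ F], rule exI[of _ 1]) (simp add: \<open>F \<in> Fsets s\<close>)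
  moreover have "F \<in> {G \<in> Fsets s. dH undefined F G < ereal 1}"
    using dH_self[of undefined F] \<open>F \<in> Fsets s\<close> by simp
  ultimately show "F \<in> \<Union> {{G \<in> Fsets s. dH A F G < ereal \<epsilon>} | A F \<epsilon>. F \<in> Fsets s \<and> \<epsilon> > 0}"
    by (rule UnionI)
next
  fix F assume "F \<in> \<Union> {{G \<in> Fsets s. dH A F G < ereal \<epsilon>} | A F \<epsilon>. F \<in> Fsets s \<and> \<epsilon> > 0}"
  then obtain A F0 \<epsilon> where "F \<in> {G \<in> Fsets s. dH A F0 G < ereal \<epsilon>}" by blast
  then show "F \<in> Fsets s" by simp
qed

lemma openin_ball:
  assumes "F \<in> Fsets s" "\<epsilon> > 0"
  shows "openin (hypertop s) {G \<in> Fsets s. dH A F G < ereal \<epsilon>}"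
  unfolding hypertop_def
  by (rule topology_generated_by_Basis, rule CollectI, rule exI[of _ A], rule exI[of _ F], rule exI[of _ \<epsilon>])
    (simp add: assms)

definition Ubd :: "('k::real_normed_field \<Rightarrow> 'x::{ab_group_add,t2_space} \<Rightarrow> 'x) \<Rightarrow> 'x \<Rightarrow> ('x \<Rightarrow> 'k) set set" where
  "Ubd s A = {G \<in> Fsets s. bdd_above ((\<lambda>\<sigma>. norm (\<sigma> A)) ` G)}"

lemma bdd_step:
  fixes F G :: "('a \<Rightarrow> 'b::real_normed_vector) set"
  assumes "\<forall>\<sigma>\<in>F. \<exists>\<tau>\<in>G. norm (\<sigma> A - \<tau> A) < (1::real)" "\<forall>\<tau>\<in>G. norm (\<tau> A) \<le> M" "\<sigma> \<in> F"
  shows "norm (\<sigma> A) \<le> M + 1"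
proof -
  obtain \<tau> where t: "\<tau> \<in> G" "norm (\<sigma> A - \<tau> A) < 1" using assms(1) assms(3) by blast
  have "norm (\<sigma> A) \<le> norm (\<sigma> A - \<tau> A) + norm (\<tau> A)"
    using norm_triangle_ineq[of "\<sigma> A - \<tau> A" "\<tau> A"] by simp
  moreover have "norm (\<tau> A) \<le> M" using assms(2) t(1) by blast
  ultimately show ?thesis using t(2) by linarith
qed

lemma bdd_transfer:
  fixes F G :: "('a \<Rightarrow> 'b::real_normed_vector) set"
  assumes "\<forall>\<sigma>\<in>F. \<exists>\<tau>\<in>G. norm (\<sigma> A - \<tau> A) < (1::real)" "bdd_above ((\<lambda>\<sigma>. norm (\<sigma> A)) ` G)"
  shows "bdd_above ((\<lambda>\<sigma>. norm (\<sigma> A)) ` F)"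
proof -
  obtain M where M0: "\<forall>x\<in>(\<lambda>\<sigma>. norm (\<sigma> A)) ` G. x \<le> M" using assms(2) unfolding bdd_above_def by blast
  then have MM: "\<forall>\<tau>\<in>G. norm (\<tau> A) \<le> M" by simp
  have "norm (\<sigma> A) \<le> M + 1" if "\<sigma> \<in> F" for \<sigma>
    using bdd_step[OF assms(1) MM that] .
  then show ?thesis by (rule bdd_aboveI2)
qed

lemma Ubd_sub: "Ubd s A \<subseteq> Fsets s"
  unfolding Ubd_def by blast

lemma Ubd_open: "openin (hypertop s) (Ubd s A)"
proof (subst openin_subopen, intro ballI)
  fix G assume G: "G \<in> Ubd s A"
  have GF: "G \<in> Fsets s" using G Ubd_sub by blast
  have Gb: "bdd_above ((\<lambda>\<sigma>. norm (\<sigma> A)) ` G)" using G unfolding Ubd_def by simp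
  define T where "T = {H \<in> Fsets s. dH A G H < ereal 1}"
  have "openin (hypertop s) T" unfolding T_def by (rule openin_ball[OF GF]) simp
  moreover have "G \<in> T" unfolding T_def using GF dH_self[of A G] by simp
  moreover have "T \<subseteq> Ubd s A"
  proof
    fix H assume H: "H \<in> T"
    then have HF: "H \<in> Fsets s" and d: "dH A G H < ereal 1" unfolding T_def by auto
    have "\<forall>\<tau>\<in>H. \<exists>\<sigma>\<in>G. norm (\<sigma> A - \<tau> A) < 1" using dH_lessD[OF d] by blast
    then have "\<forall>\<tau>\<in>H. \<exists>\<sigma>\<in>G. norm (\<tau> A - \<sigma> A) < 1" by (metis norm_minus_commute)
    then have "bdd_above ((\<lambda>\<sigma>. norm (\<sigma> A)) ` H)" using Gb by (rule bdd_transfer)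
    then show "H \<in> Ubd s A" using HF unfolding Ubd_def by blast
  qed
  ultimately show "\<exists>T. openin (hypertop s) T \<and> G \<in> T \<and> T \<subseteq> Ubd s A" by blast
qed

lemma Ubd_closed: "closedin (hypertop s) (Ubd s A)"
  unfolding closedin_def
proof
  show "Ubd s A \<subseteq> topspace (hypertop s)" using Ubd_sub topspace_hyper by blast
  show "openin (hypertop s) (topspace (hypertop s) - Ubd s A)"
  proof (subst openin_subopen, intro ballI)
    fix G assume G: "G \<in> topspace (hypertop s) - Ubd s A"
    have GF: "G \<in> Fsets s" using G topspace_hyper by blast
    have Gb: "\<not> bdd_above ((\<lambda>\<sigma>. norm (\<sigma> A)) ` G)" using G GF unfolding Ubd_def by blast
    define T where "T = {H \<in> Fsets s. dH A G H < ereal 1}"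
    have "openin (hypertop s) T" unfolding T_def by (rule openin_ball[OF GF]) simp
    moreover have "G \<in> T" unfolding T_def using GF dH_self[of A G] by simp
    moreover have "T \<subseteq> topspace (hypertop s) - Ubd s A"
    proof
      fix H assume H: "H \<in> T"
      then have HF: "H \<in> Fsets s" and d: "dH A G H < ereal 1" unfolding T_def by auto
      have GH: "\<forall>\<sigma>\<in>G. \<exists>\<tau>\<in>H. norm (\<sigma> A - \<tau> A) < 1" using dH_lessD[OF d] by blast
      have "\<not> bdd_above ((\<lambda>\<sigma>. norm (\<sigma> A)) ` H)"
      proof
        assume "bdd_above ((\<lambda>\<sigma>. norm (\<sigma> A)) ` H)"
        from bdd_transfer[OF GH this] show False using Gb by contradiction
      qed
      then show "H \<in> topspace (hypertop s) - Ubd s A" using HF unfolding Ubd_def by (simp add: topspace_hyper)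
    qed
    ultimately show "\<exists>T. openin (hypertop s) T \<and> G \<in> T \<and> T \<subseteq> topspace (hypertop s) - Ubd s A"
      by blast
  qed
qed

lemma Bsets_Inter: "Bsets s = \<Inter> (range (Ubd s))"
  by (auto simp: Bsets_def Ubd_def)

lemma Bsets_closed: "closedin (hypertop s) (Bsets s)"
  unfolding Bsets_Inter by (intro closedin_Inter) (auto intro: Ubd_closed)


lemma norm_shift:
  fixes a z :: "'k::real_normed_field"
  shows "norm (a - of_real t * z) \<le> norm (a - of_real t0 * z) + \<bar>t - t0\<bar> * norm z"
proof -
  have "a - of_real t * z = (a - of_real t0 * z) + of_real (t0 - t) * z"
    by (simp add: algebra_simps)
  then have "norm (a - of_real t * z) \<le> norm (a - of_real t0 * z) + norm (of_real (t0 - t) * z)"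
    by (metis norm_triangle_ineq)
  also have "norm (of_real (t0 - t) * z) = \<bar>t - t0\<bar> * norm z"
    by (simp only: norm_mult norm_of_real) (simp add: abs_minus_commute)
  finally show ?thesis .
qed

lemma dH_scale_cont:
  fixes B :: "('x \<Rightarrow> 'k::real_normed_field) set"
  assumes d: "dH A F ((\<lambda>\<sigma> x. of_real t0 * \<sigma> x) ` B) < ereal \<epsilon>"
    and M: "\<forall>\<sigma>\<in>B. norm (\<sigma> A) \<le> M" "M > 0"
  shows "\<exists>\<delta>>0. \<forall>t. dist t t0 < \<delta> \<longrightarrow> dH A F ((\<lambda>\<sigma> x. of_real t * \<sigma> x) ` B) < ereal \<epsilon>"
proof -
  obtain e0 where e0: "dH A F ((\<lambda>\<sigma> x. of_real t0 * \<sigma> x) ` B) < ereal e0" "e0 < \<epsilon>"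
    using ereal_dense2[OF d] by auto
  have P1: "\<forall>\<sigma>\<in>F. \<exists>\<tau>\<in>B. norm (\<sigma> A - of_real t0 * \<tau> A) < e0"
   and P2: "\<forall>\<tau>\<in>B. \<exists>\<sigma>\<in>F. norm (\<sigma> A - of_real t0 * \<tau> A) < e0"
    using dH_lessD[OF e0(1)] by auto
  define \<delta> where "\<delta> = (\<epsilon> - e0) / (2 * M)"
  have "\<delta> > 0" using e0 M by (simp add: \<delta>_def)
  moreover have "dH A F ((\<lambda>\<sigma> x. of_real t * \<sigma> x) ` B) < ereal \<epsilon>" if "dist t t0 < \<delta>" for t
  proof -
    define e1 where "e1 = e0 + \<bar>t - t0\<bar> * M"
    have "\<bar>t - t0\<bar> * M < \<delta> * M" using that M by (simp add: dist_real_def)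
    also have "\<delta> * M = (\<epsilon> - e0) / 2" using M by (simp add: \<delta>_def)
    finally have e1: "e1 < \<epsilon>" using e0 by (simp add: e1_def)
    have est: "norm (\<sigma> A - of_real t * \<tau> A) \<le> e1"
      if "norm (\<sigma> A - of_real t0 * \<tau> A) < e0" "\<tau> \<in> B" for \<sigma> \<tau> :: "'x \<Rightarrow> 'k"
    proof -
      have "\<bar>t - t0\<bar> * norm (\<tau> A) \<le> \<bar>t - t0\<bar> * M" using M that(2) by (simp add: mult_left_mono)
      then show ?thesis using norm_shift[of "\<sigma> A" t "\<tau> A" t0] that(1) by (simp add: e1_def)
    qed
    have "dH A F ((\<lambda>\<sigma> x. of_real t * \<sigma> x) ` B) \<le> ereal e1"
    proof (rule dH_leI)
      show "\<forall>\<sigma>\<in>F. \<exists>\<rho>\<in>(\<lambda>\<sigma> x. of_real t * \<sigma> x) ` B. norm (\<sigma> A - \<rho> A) \<le> e1"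
        using P1 est by fastforce
      show "\<forall>\<rho>\<in>(\<lambda>\<sigma> x. of_real t * \<sigma> x) ` B. \<exists>\<sigma>\<in>F. norm (\<sigma> A - \<rho> A) \<le> e1"
        using P2 est by fastforce
    qed
    moreover have "ereal e1 < ereal \<epsilon>" using e1 by simp
    ultimately show ?thesis by (rule order_le_less_trans)
  qed
  ultimately show ?thesis by blast
qed

lemma scaled_Fsets_all:
  fixes s :: "'k::real_normed_field \<Rightarrow> 'x::{ab_group_add,t2_space} \<Rightarrow> 'x"
  assumes "tvs s" "B \<in> Fsets s"
  shows "(\<lambda>\<sigma> x. of_real t * \<sigma> x) ` B \<in> Fsets s"
proof (cases "t = 0")
  case True
  have "B \<noteq> {}" using assms(2) by (simp add: Fsets_def)
  then have "(\<lambda>\<sigma> x. of_real t * \<sigma> x) ` B = {\<lambda>x. 0}" using True by auto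
  then show ?thesis using closed_zero[OF assms(1)] by (simp add: Fsets_def)
next
  case False
  then show ?thesis using scaled_F[OF assms(2), of "of_real t"] by simp
qed

lemma path_to_zero:
  fixes s :: "'k::real_normed_field \<Rightarrow> 'x::{ab_group_add,t2_space} \<Rightarrow> 'x"
  assumes "tvs s" "B \<in> Bsets s"
  shows "path_component_of (subtopology (hypertop s) (Bsets s)) B {\<lambda>x. 0}"
proof -
  define g where "g t = (\<lambda>\<sigma> x. of_real t * \<sigma> x) ` B" for t :: real
  have BF: "B \<in> Fsets s" and bd: "\<forall>A. bdd_above ((\<lambda>\<sigma>. norm (\<sigma> A)) ` B)"
    using assms(2) by (auto simp: Bsets_def)
  have gF: "g t \<in> Fsets s" for t unfolding g_def by (rule scaled_Fsets_all[OF assms(1) BF])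
  have g0: "g 0 = {\<lambda>x. 0}" using BF by (auto simp: g_def Fsets_def)
  have g1: "g 1 = B" by (simp add: g_def)
  have gB: "g t \<in> Bsets s" if "t \<in> {0..1}" for t
  proof -
    have "bdd_above ((\<lambda>\<sigma>. norm (\<sigma> A)) ` g t)" for A
    proof -
      obtain M where M: "\<forall>\<sigma>\<in>B. norm (\<sigma> A) \<le> M" using bd by (auto simp: bdd_above_def)
      have "norm (of_real t * \<sigma> A) \<le> M" if "\<sigma> \<in> B" for \<sigma>
      proof -
        have "norm (of_real t * \<sigma> A) = \<bar>t\<bar> * norm (\<sigma> A)" by (simp add: norm_mult)
        also have "\<dots> \<le> 1 * norm (\<sigma> A)" using \<open>t \<in> {0..1}\<close> by (intro mult_right_mono) auto
        finally show ?thesis using M that by auto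
      qed
      then show ?thesis by (intro bdd_aboveI2[where M=M]) (auto simp: g_def)
    qed
    then show ?thesis using gF by (simp add: Bsets_def)
  qed
  have "continuous_map (top_of_set {0..1}) (hypertop s) g"
    unfolding hypertop_def
  proof (rule continuous_on_generated_topo)
    fix U assume "U \<in> {{G \<in> Fsets s. dH A F G < ereal \<epsilon>} | A F \<epsilon>. F \<in> Fsets s \<and> \<epsilon> > 0}"
    then obtain A F \<epsilon> where U: "U = {G \<in> Fsets s. dH A F G < ereal \<epsilon>}" by auto
    obtain M0 where M0: "\<forall>\<sigma>\<in>B. norm (\<sigma> A) \<le> M0" using bd by (auto simp: bdd_above_def)
    have M: "\<forall>\<sigma>\<in>B. norm (\<sigma> A) \<le> \<bar>M0\<bar> + 1" "\<bar>M0\<bar> + 1 > 0" using M0 by force+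
    have "g -` U \<inter> topspace (top_of_set {0..1}) = {t \<in> {0..1}. dH A F (g t) < ereal \<epsilon>}"
      using gF by (auto simp: U)
    moreover have "openin (top_of_set {0..1}) {t \<in> {0..1}. dH A F (g t) < ereal \<epsilon>}"
      unfolding openin_euclidean_subtopology_iff
    proof (intro conjI ballI)
      fix t0 assume "t0 \<in> {t \<in> {0..1}. dH A F (g t) < ereal \<epsilon>}"
      then obtain \<delta> where "\<delta> > 0" "\<forall>t. dist t t0 < \<delta> \<longrightarrow> dH A F (g t) < ereal \<epsilon>"
        using dH_scale_cont[OF _ M] unfolding g_def by blast
      then show "\<exists>e>0. \<forall>x'\<in>{0..1}. dist x' t0 < e \<longrightarrow> x' \<in> {t \<in> {0..1}. dH A F (g t) < ereal \<epsilon>}"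
        by blast
    qed auto
    ultimately show "openin (top_of_set {0..1}) (g -` U \<inter> topspace (top_of_set {0..1}))" by simp
  next
    show "g ` topspace (top_of_set {0..1}) \<subseteq> \<Union> {{G \<in> Fsets s. dH A F G < ereal \<epsilon>} | A F \<epsilon>. F \<in> Fsets s \<and> \<epsilon> > 0}"
      using gF topspace_hyper[of s] unfolding hypertop_def topology_generated_by_topspace by auto
  qed
  then have "pathin (subtopology (hypertop s) (Bsets s)) g"
    using gB unfolding pathin_subtopology by (auto simp: pathin_def)
  then have "path_component_of (subtopology (hypertop s) (Bsets s)) (g 1) (g 0)"
    by (metis path_component_of_set path_component_of_sym)
  then show ?thesis using g0 g1 by simp
qed


lemma convex_B:
  fixes s :: "'k::real_normed_field \<Rightarrow> 'x::{ab_group_add,t2_space} \<Rightarrow> 'x"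
  assumes B0: "B0 \<in> Bsets s" and B1: "B1 \<in> Bsets s" and l: "0 \<le> l" "l \<le> 1"
  shows "(weakstar s) closure_of
            {(\<lambda>x. of_real (1 - l) * \<sigma>0 x + of_real l * \<sigma>1 x) | \<sigma>0 \<sigma>1. \<sigma>0 \<in> B0 \<and> \<sigma>1 \<in> B1}
          \<in> Bsets s"
proof -
  define S where "S = {(\<lambda>x. of_real (1 - l) * \<sigma>0 x + of_real l * \<sigma>1 x) | \<sigma>0 \<sigma>1. \<sigma>0 \<in> B0 \<and> \<sigma>1 \<in> B1}"
  have F0: "B0 \<in> Fsets s" and F1: "B1 \<in> Fsets s" using B0 B1 by (auto simp: Bsets_def)
  have Ssub: "S \<subseteq> topspace (weakstar s)"
  proof
    fix \<rho> assume "\<rho> \<in> S"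
    then obtain \<sigma>0 \<sigma>1 where \<rho>: "\<rho> = (\<lambda>x. of_real (1 - l) * \<sigma>0 x + of_real l * \<sigma>1 x)"
        "\<sigma>0 \<in> B0" "\<sigma>1 \<in> B1" by (auto simp: S_def)
    then have "\<sigma>0 \<in> tdual s" "\<sigma>1 \<in> tdual s" using Fsets_sub[OF F0] Fsets_sub[OF F1] by auto
    from tdual_comb[OF this, of "of_real (1 - l)" "of_real l"]
    show "\<rho> \<in> topspace (weakstar s)" by (simp add: \<rho>(1) topspace_weakstar)
  qed
  have "S \<noteq> {}" using F0 F1 by (auto simp: S_def Fsets_def)
  then have ne: "(weakstar s) closure_of S \<noteq> {}"
    using closure_of_subset[OF Ssub] by auto
  have bd: "bdd_above ((\<lambda>\<sigma>. norm (\<sigma> A)) ` ((weakstar s) closure_of S))" for A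
  proof -
    obtain M0 where M0: "\<forall>\<sigma>\<in>B0. norm (\<sigma> A) \<le> M0" using B0 by (auto simp: Bsets_def bdd_above_def)
    obtain M1 where M1: "\<forall>\<sigma>\<in>B1. norm (\<sigma> A) \<le> M1" using B1 by (auto simp: Bsets_def bdd_above_def)
    define K where "K = {\<sigma>\<in>tdual s. \<sigma> A \<in> cball 0 (M0 + M1)}"
    have "S \<subseteq> K"
    proof
      fix \<rho> assume "\<rho> \<in> S"
      then obtain \<sigma>0 \<sigma>1 where \<rho>: "\<rho> = (\<lambda>x. of_real (1 - l) * \<sigma>0 x + of_real l * \<sigma>1 x)"
        "\<sigma>0 \<in> B0" "\<sigma>1 \<in> B1" by (auto simp: S_def)
      have "norm (of_real (1 - l) * \<sigma>0 A + of_real l * \<sigma>1 A)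
          \<le> norm (of_real (1 - l) * \<sigma>0 A) + norm (of_real l * \<sigma>1 A)" by (rule norm_triangle_ineq)
      also have "\<dots> = \<bar>1 - l\<bar> * norm (\<sigma>0 A) + \<bar>l\<bar> * norm (\<sigma>1 A)"
        by (simp only: norm_mult norm_of_real)
      also have "\<dots> = (1 - l) * norm (\<sigma>0 A) + l * norm (\<sigma>1 A)"
        using l by simp
      also have "\<dots> \<le> 1 * norm (\<sigma>0 A) + 1 * norm (\<sigma>1 A)"
        using l by (intro add_mono mult_right_mono) auto
      also have "\<dots> \<le> M0 + M1" using M0 M1 \<rho> by (simp add: add_mono)
      finally have "norm (\<rho> A) \<le> M0 + M1" by (simp add: \<rho>(1))
      moreover have "\<rho> \<in> tdual s" using \<open>\<rho> \<in> S\<close> Ssub by (auto simp: topspace_weakstar)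
      ultimately show "\<rho> \<in> K" by (simp add: K_def)
    qed
    then have "(weakstar s) closure_of S \<subseteq> K"
      using closedin_eval[of "cball 0 (M0 + M1)" s A] unfolding K_def by (intro closure_of_minimal) auto
    then show ?thesis by (intro bdd_aboveI2[of _ _ "M0 + M1"]) (auto simp: K_def)
  qed
  have "(weakstar s) closure_of S \<in> Bsets s"
    unfolding Bsets_def Fsets_def using ne bd closedin_closure_of[of "weakstar s" S] by blast
  then show ?thesis by (simp only: S_def)
qed

lemma zero_B:
  fixes s :: "'k::real_normed_field \<Rightarrow> 'x::{ab_group_add,t2_space} \<Rightarrow> 'x"
  assumes "tvs s"
  shows "{\<lambda>x. 0::'k} \<in> Bsets s"
  using closed_zero[OF assms] by (simp add: Bsets_def Fsets_def)

theorem proposition3p4: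
  fixes smult_X :: "'k::{real_normed_field,euclidean_space} \<Rightarrow> 'x::{ab_group_add,t2_space} \<Rightarrow> 'x"
  assumes "tvs smult_X"
    and "dual_separates smult_X"
  shows "closedin (hypertop smult_X) (Bsets smult_X)
    \<and> (\<forall>B0\<in>Bsets smult_X. \<forall>B1\<in>Bsets smult_X. \<forall>l::real. 0 \<le> l \<and> l \<le> 1 \<longrightarrow>
          (weakstar smult_X) closure_of
            {(\<lambda>x. of_real (1 - l) * \<sigma>0 x + of_real l * \<sigma>1 x) | \<sigma>0 \<sigma>1. \<sigma>0 \<in> B0 \<and> \<sigma>1 \<in> B1}
          \<in> Bsets smult_X)
    \<and> path_connectedin (hypertop smult_X) (Bsets smult_X)
    \<and> Bsets smult_X \<in> connected_components_of (hypertop smult_X)"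
proof (intro conjI ballI allI impI)
  show "closedin (hypertop smult_X) (Bsets smult_X)" by (rule Bsets_closed)
next
  fix B0 B1 and l :: real
  assume "B0 \<in> Bsets smult_X" "B1 \<in> Bsets smult_X" "0 \<le> l \<and> l \<le> 1"
  then show "(weakstar smult_X) closure_of
            {(\<lambda>x. of_real (1 - l) * \<sigma>0 x + of_real l * \<sigma>1 x) | \<sigma>0 \<sigma>1. \<sigma>0 \<in> B0 \<and> \<sigma>1 \<in> B1}
          \<in> Bsets smult_X" using convex_B by blast
next
  have sub: "Bsets smult_X \<subseteq> topspace (hypertop smult_X)"
    by (auto simp: topspace_hyper Bsets_def)
  have pc: "path_connectedin (hypertop smult_X) (Bsets smult_X)"
    unfolding path_connectedin_def path_connected_space_iff_path_component
  proof (intro conjI ballI sub)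
    fix x y assume "x \<in> topspace (subtopology (hypertop smult_X) (Bsets smult_X))"
      "y \<in> topspace (subtopology (hypertop smult_X) (Bsets smult_X))"
    then have "x \<in> Bsets smult_X" "y \<in> Bsets smult_X" by auto
    then show "path_component_of (subtopology (hypertop smult_X) (Bsets smult_X)) x y"
      using path_to_zero[OF assms(1)]
      by (meson path_component_of_sym path_component_of_trans)
  qed
  then show "path_connectedin (hypertop smult_X) (Bsets smult_X)" .
  define z where "z = {\<lambda>x::'x. 0::'k}"
  have zB: "z \<in> Bsets smult_X" using zero_B[OF assms(1)] by (simp add: z_def)
  have zT: "z \<in> topspace (hypertop smult_X)" using zB sub by auto
  have "Bsets smult_X = connected_component_of_set (hypertop smult_X) z"
  proof
    show "Bsets smult_X \<subseteq> connected_component_of_set (hypertop smult_X) z"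
      using connected_component_of_maximal[OF path_connectedin_imp_connectedin[OF pc] zB] .
  next
    let ?C = "connected_component_of_set (hypertop smult_X) z"
    have "?C \<subseteq> Ubd smult_X A" for A
    proof -
      have "?C \<subseteq> Ubd smult_X A \<or> disjnt ?C (Ubd smult_X A)"
        using connectedin_clopen_cases[OF connectedin_connected_component_of Ubd_closed Ubd_open] by blast
      moreover have "z \<in> ?C" using zT by (simp add: connected_component_of_refl)
      moreover have "z \<in> Ubd smult_X A" using zB by (simp add: Bsets_Inter)
      ultimately show ?thesis by (auto simp: disjnt_def)
    qed
    then show "?C \<subseteq> Bsets smult_X" by (auto simp: Bsets_Inter)
  qed
  then show "Bsets smult_X \<in> connected_components_of (hypertop smult_X)"
    using zT by (auto simp: connected_components_of_def)
qed

end
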